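(* Let $M$ be a matroid on $E$, $\mathfrak{S}\subseteq\mathcal{P}(E)$, and $S\in\mathfrak{S}$ such that $M|_S$ is disconnected, say $M|_S=\bigoplus_i M|_{S_i}$. Suppose that for every $T\in\mathfrak{S}$ with $T\subseteq S$, each connected component of $M|_T$ also belongs to $\mathfrak{S}$. Then $a_{\mathfrak{S}}(S)=0$.
   Context: A matroid is connected if it is not a direct sum of two matroids on nonempty ground sets; connected components are the ground sets of the summands in the decomposition into connected matroids. For $\mathfrak{T}\subseteq\mathcal{P}(E)$ and $T\in\mathfrak{T}$: $c(T)=\#T-\mathrm{rk}\,T$ and $a_{\mathfrak{T}}(T)=c(T)-\sum_{U\in\mathfrak{T},U\subsetneq T}a_{\mathfrak{T}}(U)$ recursively, with $a_{\mathfrak{T}}(\varnothing)=0$. *)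

theory Defs
  imports Main
begin

definition matroid :: "'a set \<Rightarrow> ('a set \<Rightarrow> bool) \<Rightarrow> bool" where
  "matroid E indep \<longleftrightarrow> finite E \<and> indep {} \<and>
     (\<forall>I. indep I \<longrightarrow> I \<subseteq> E) \<and>
     (\<forall>I J. indep J \<longrightarrow> I \<subseteq> J \<longrightarrow> indep I) \<and>
     (\<forall>I J. indep I \<longrightarrow> indep J \<longrightarrow> card I < card J \<longrightarrow>
        (\<exists>x \<in> J - I. indep (insert x I)))"

definition rk :: "('a set \<Rightarrow> bool) \<Rightarrow> 'a set \<Rightarrow> nat" where
  "rk indep X = Max {card I | I. I \<subseteq> X \<and> indep I}"

definition restr :: "('a set \<Rightarrow> bool) \<Rightarrow> 'a set \<Rightarrow> ('a set \<Rightarrow> bool)" where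
  "restr indep S = (\<lambda>I. indep I \<and> I \<subseteq> S)"

definition dsum :: "('a set \<Rightarrow> bool) \<Rightarrow> ('a set \<Rightarrow> bool) \<Rightarrow> ('a set \<Rightarrow> bool)" where
  "dsum i1 i2 = (\<lambda>I. \<exists>I1 I2. I = I1 \<union> I2 \<and> i1 I1 \<and> i2 I2)"

definition connected_matroid :: "'a set \<Rightarrow> ('a set \<Rightarrow> bool) \<Rightarrow> bool" where
  "connected_matroid E indep \<longleftrightarrow>
     \<not> (\<exists>A B i1 i2. A \<noteq> {} \<and> B \<noteq> {} \<and> A \<inter> B = {} \<and> A \<union> B = E \<and>
          matroid A i1 \<and> matroid B i2 \<and> indep = dsum i1 i2)"

definition component :: "('a set \<Rightarrow> bool) \<Rightarrow> 'a set \<Rightarrow> 'a set \<Rightarrow> bool" where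
  "component indep T C \<longleftrightarrow> C \<noteq> {} \<and> C \<subseteq> T \<and>
     restr indep T = dsum (restr indep C) (restr indep (T - C)) \<and>
     connected_matroid C (restr indep C)"

definition nullity :: "('a set \<Rightarrow> bool) \<Rightarrow> 'a set \<Rightarrow> int" where
  "nullity indep T = int (card T) - int (rk indep T)"

text \<open>a_T(T) = c(T) - sum_{U in T, U proper subset of T} a_T(U), a(empty) = 0.
  Computed with fuel n; the fuel card T suffices since proper subsets have smaller card.\<close>
fun a_aux :: "nat \<Rightarrow> ('a set \<Rightarrow> bool) \<Rightarrow> 'a set set \<Rightarrow> 'a set \<Rightarrow> int" where
  "a_aux 0 indep \<T> T = (if T = {} then 0 else nullity indep T)"
| "a_aux (Suc n) indep \<T> T = (if T = {} then 0 else
      nullity indep T - (\<Sum>U \<in> {U \<in> \<T>. U \<subset> T}. a_aux n indep \<T> U))"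

definition a_coef :: "('a set \<Rightarrow> bool) \<Rightarrow> 'a set set \<Rightarrow> 'a set \<Rightarrow> int" where
  "a_coef indep \<T> T = a_aux (card T) indep \<T> T"

end

theory Submission
  imports Defs
begin

definition sep :: "('a set \<Rightarrow> bool) \<Rightarrow> 'a set \<Rightarrow> 'a set \<Rightarrow> bool" where
  "sep indep T X \<longleftrightarrow> X \<subseteq> T \<and> restr indep T = dsum (restr indep X) (restr indep (T - X))"

definition Phi :: "('a set \<Rightarrow> bool) \<Rightarrow> 'a set set \<Rightarrow> 'a set \<Rightarrow> int" where
  "Phi indep SS X = (\<Sum>U\<in>{U\<in>SS. U \<subseteq> X \<and> U \<noteq> {} \<and> connected_matroid U (restr indep U)}.
      a_coef indep SS U)"

lemma conn_empty: "connected_matroid {} i"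
  unfolding connected_matroid_def by auto

lemma a_aux_empty: "a_aux n indep SS {} = 0"
  by (cases n) auto

lemma a_aux_stable:
  "finite T \<Longrightarrow> card T \<le> n \<Longrightarrow> a_aux n indep SS T = a_aux (card T) indep SS T"
proof (induction "card T" arbitrary: T n rule: less_induct)
  case less
  show ?case
  proof (cases "T = {}")
    case True then show ?thesis by (simp add: a_aux_empty)
  next
    case False
    then obtain j where j: "card T = Suc j" using less(2) by (cases "card T") auto
    then obtain m where m: "n = Suc m" "j \<le> m" using less(3) by (cases n) auto
    have hU: "a_aux m indep SS U = a_aux j indep SS U" if "U \<in> {U \<in> SS. U \<subset> T}" for U
    proof -
      have fU: "card U < card T" "finite U" using that less(2) finite_subset psubset_card_mono by auto
      have c: "card U \<le> m" "card U \<le> j" using fU j m by linarith+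
      show ?thesis using less(1)[OF fU c(1)] less(1)[OF fU c(2)] by simp
    qed
    have "a_aux n indep SS T = nullity indep T - (\<Sum>U\<in>{U\<in>SS. U \<subset> T}. a_aux m indep SS U)"
      using False m by simp
    also have "\<dots> = nullity indep T - (\<Sum>U\<in>{U\<in>SS. U \<subset> T}. a_aux j indep SS U)"
      using hU by (metis (no_types, lifting) sum.cong)
    also have "\<dots> = a_aux (card T) indep SS T" using False j by simp
    finally show ?thesis .
  qed
qed

lemma a_coef_empty: "a_coef indep SS {} = 0"
  by (simp add: a_coef_def)

lemma a_coef_rec:
  assumes "finite X" "X \<noteq> {}"
  shows "a_coef indep SS X = nullity indep X - (\<Sum>U\<in>{U\<in>SS. U \<subset> X}. a_coef indep SS U)"
proof -
  obtain j where j: "card X = Suc j" using assms by (cases "card X") auto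
  have hU: "a_aux j indep SS U = a_coef indep SS U" if "U \<in> {U \<in> SS. U \<subset> X}" for U
  proof -
    have "finite U" "card U < card X" using that assms finite_subset psubset_card_mono by auto
    moreover then have "card U \<le> j" using j by linarith
    ultimately show ?thesis unfolding a_coef_def using a_aux_stable[of U j] by simp
  qed
  have "a_coef indep SS X = nullity indep X - (\<Sum>U\<in>{U\<in>SS. U \<subset> X}. a_aux j indep SS U)"
    unfolding a_coef_def using j assms by simp
  also have "\<dots> = nullity indep X - (\<Sum>U\<in>{U\<in>SS. U \<subset> X}. a_coef indep SS U)"
    using hU by (metis (no_types, lifting) sum.cong)
  finally show ?thesis .
qed

context
  fixes E :: "'a set" and indep :: "'a set \<Rightarrow> bool"
  assumes M: "matroid E indep"
begin

lemma finE: "finite E" using M[unfolded matroid_def] by (elim conjE)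
lemma iempty: "indep {}" using M[unfolded matroid_def] by (elim conjE)
lemma isubE: "indep I \<Longrightarrow> I \<subseteq> E"
  using M[unfolded matroid_def] by blast
lemma hered: "indep J \<Longrightarrow> I \<subseteq> J \<Longrightarrow> indep I"
  using M[unfolded matroid_def] by blast
lemma augm: "indep I \<Longrightarrow> indep J \<Longrightarrow> card I < card J \<Longrightarrow> \<exists>x \<in> J - I. indep (insert x I)"
  using M[unfolded matroid_def] by blast

lemma sep_char:
  assumes "X \<subseteq> T"
  shows "sep indep T X \<longleftrightarrow> (\<forall>I\<subseteq>T. indep (I \<inter> X) \<and> indep (I - X) \<longrightarrow> indep I)"
proof
  assume S: "sep indep T X"
  have eq: "(indep I \<and> I \<subseteq> T) = (\<exists>I1 I2. I = I1 \<union> I2 \<and> (indep I1 \<and> I1 \<subseteq> X) \<and> (indep I2 \<and> I2 \<subseteq> T - X))" for I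
    using fun_cong[OF conjunct2[OF S[unfolded sep_def]], of I] unfolding restr_def dsum_def by simp
  show "\<forall>I\<subseteq>T. indep (I \<inter> X) \<and> indep (I - X) \<longrightarrow> indep I"
  proof (intro allI impI)
    fix I assume a: "I \<subseteq> T" "indep (I \<inter> X) \<and> indep (I - X)"
    have "\<exists>I1 I2. I = I1 \<union> I2 \<and> (indep I1 \<and> I1 \<subseteq> X) \<and> (indep I2 \<and> I2 \<subseteq> T - X)"
      by (rule exI[of _ "I \<inter> X"], rule exI[of _ "I - X"]) (use a in auto)
    then show "indep I" using eq[of I] by blast
  qed
next
  assume H: "\<forall>I\<subseteq>T. indep (I \<inter> X) \<and> indep (I - X) \<longrightarrow> indep I"
  show "sep indep T X" unfolding sep_def restr_def dsum_def
  proof (rule conjI[OF assms], rule ext, rule iffI)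
    fix I assume a: "indep I \<and> I \<subseteq> T"
    have "indep (I \<inter> X)" "indep (I - X)" by (rule hered[OF conjunct1[OF a]], blast)+
    then show "\<exists>I1 I2. I = I1 \<union> I2 \<and> (indep I1 \<and> I1 \<subseteq> X) \<and> indep I2 \<and> I2 \<subseteq> T - X"
      by (intro exI[of _ "I \<inter> X"] exI[of _ "I - X"]) (use a in auto)
  next
    fix I assume "\<exists>I1 I2. I = I1 \<union> I2 \<and> (indep I1 \<and> I1 \<subseteq> X) \<and> indep I2 \<and> I2 \<subseteq> T - X"
    then obtain I1 I2 where I: "I = I1 \<union> I2" "indep I1" "I1 \<subseteq> X" "indep I2" "I2 \<subseteq> T - X" by blast
    then have e: "I \<inter> X = I1" "I - X = I2" by auto
    have IT: "I \<subseteq> T" using I assms by auto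
    have "indep (I \<inter> X)" "indep (I - X)" unfolding e using I(2,4) .
    then have "indep I" using H IT by blast
    then show "indep I \<and> I \<subseteq> T" using IT by blast
  qed
qed

lemma sep_sub: "sep indep T X \<Longrightarrow> X \<subseteq> T" unfolding sep_def by auto

lemma sep_charI:
  assumes "X \<subseteq> T" "\<And>I. I \<subseteq> T \<Longrightarrow> indep (I \<inter> X) \<Longrightarrow> indep (I - X) \<Longrightarrow> indep I"
  shows "sep indep T X"
  using sep_char[OF assms(1)] assms(2) by blast

lemma sep_charD:
  assumes "sep indep T X" "I \<subseteq> T" "indep (I \<inter> X)" "indep (I - X)"
  shows "indep I"
  using sep_char[OF sep_sub[OF assms(1)]] assms by blast

lemma sep_refl: "sep indep X X"
  by (rule sep_charI) (auto simp: Int_absorb2)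

lemma sep_trans:
  assumes "sep indep T X" "sep indep X A" shows "sep indep T A"
proof -
  have AX: "A \<subseteq> X" "X \<subseteq> T" using assms sep_sub by auto
  show ?thesis
  proof (rule sep_charI)
    show "A \<subseteq> T" using AX by auto
  next
    fix I assume I0: "I \<subseteq> T" "indep (I \<inter> A)" "indep (I - A)"
    then have I: "I \<subseteq> T \<and> indep (I \<inter> A) \<and> indep (I - A)" by auto
    have "(I \<inter> X) \<inter> A = I \<inter> A" using AX by auto
    moreover have "indep ((I \<inter> X) - A)" by (rule hered[OF I0(3)]) auto
    ultimately have "indep (I \<inter> X)" using sep_charD[OF assms(2), of "I \<inter> X"] I0 by auto
    moreover have "indep (I - X)" by (rule hered[OF I0(3)]) (use AX in auto)
    ultimately show "indep I" using sep_charD[OF assms(1)] I0 by auto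
  qed
qed

lemma sep_compl:
  assumes "sep indep X A" shows "sep indep X (X - A)"
proof -
  have AX: "A \<subseteq> X" using assms sep_sub by auto
  show ?thesis
  proof (rule sep_charI[OF Diff_subset])
    fix I assume I0: "I \<subseteq> X" "indep (I \<inter> (X - A))" "indep (I - (X - A))"
    then have I: "I \<subseteq> X \<and> indep (I \<inter> (X - A)) \<and> indep (I - (X - A))" by auto
    have "I \<inter> (X - A) = I - A" "I - (X - A) = I \<inter> A" using I by auto
    then show "indep I" using sep_charD[OF assms, of I] I0 by simp
  qed
qed

lemma matroid_restr: "U \<subseteq> E \<Longrightarrow> matroid U (restr indep U)"
proof -
  assume U: "U \<subseteq> E"
  have fU: "finite U" using U finE finite_subset by auto
  have 1: "\<forall>I J. (indep J \<and> J \<subseteq> U) \<longrightarrow> I \<subseteq> J \<longrightarrow> (indep I \<and> I \<subseteq> U)" using hered by blast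
  have 2: "\<forall>I J. (indep I \<and> I \<subseteq> U) \<longrightarrow> (indep J \<and> J \<subseteq> U) \<longrightarrow> card I < card J \<longrightarrow>
        (\<exists>x \<in> J - I. indep (insert x I) \<and> insert x I \<subseteq> U)"
  proof (intro allI impI)
    fix I J assume a: "indep I \<and> I \<subseteq> U" "indep J \<and> J \<subseteq> U" "card I < card J"
    then obtain x where "x \<in> J - I" "indep (insert x I)" using augm by blast
    then show "\<exists>x\<in>J - I. indep (insert x I) \<and> insert x I \<subseteq> U" using a by auto
  qed
  have 3: "\<forall>I. (indep I \<and> I \<subseteq> U) \<longrightarrow> I \<subseteq> U" by blast
  show ?thesis unfolding matroid_def restr_def using fU iempty 1 2 3 by blast
qed

lemma conn_side:
  assumes "sep indep T X" "T \<subseteq> E" "U \<subseteq> T" "connected_matroid U (restr indep U)"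
  shows "U \<subseteq> X \<or> U \<subseteq> T - X"
proof (rule ccontr)
  assume c: "\<not> (U \<subseteq> X \<or> U \<subseteq> T - X)"
  define A where "A = U \<inter> X"
  define B where "B = U - X"
  have ne: "A \<noteq> {}" "B \<noteq> {}" using c assms(3) unfolding A_def B_def by auto
  have XT: "X \<subseteq> T" using assms sep_sub by auto
  have "sep indep U A" unfolding A_def
  proof (rule sep_charI[OF Int_lower1])
    fix I assume I0: "I \<subseteq> U" "indep (I \<inter> (U \<inter> X))" "indep (I - U \<inter> X)"
    then have I: "I \<subseteq> U \<and> indep (I \<inter> (U \<inter> X)) \<and> indep (I - U \<inter> X)" by auto
    have "I \<inter> (U \<inter> X) = I \<inter> X" "I - U \<inter> X = I - X" using I by auto
    then show "indep I" using sep_charD[OF assms(1), of I] I0 assms(3) by auto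
  qed
  then have "restr indep U = dsum (restr indep A) (restr indep B)"
    unfolding sep_def A_def B_def by (simp add: Diff_Int)
  moreover have "matroid A (restr indep A)" "matroid B (restr indep B)"
  proof -
    have "A \<subseteq> E" "B \<subseteq> E" using assms(2,3) unfolding A_def B_def by auto
    then show "matroid A (restr indep A)" "matroid B (restr indep B)" using matroid_restr by auto
  qed
  moreover have "A \<inter> B = {}" "A \<union> B = U" unfolding A_def B_def by auto
  ultimately show False using assms(4) ne unfolding connected_matroid_def by blast
qed

lemma disconn_split:
  assumes "X \<subseteq> E" "\<not> connected_matroid X (restr indep X)"
  shows "\<exists>A. A \<noteq> {} \<and> X - A \<noteq> {} \<and> A \<subseteq> X \<and> sep indep X A"
proof -
  obtain A B i1 i2 where d: "A \<noteq> {}" "B \<noteq> {}" "A \<inter> B = {}" "A \<union> B = X"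
    "matroid A i1" "matroid B i2" "restr indep X = dsum i1 i2"
    using assms(2) unfolding connected_matroid_def by blast
  have i1: "\<forall>I. i1 I \<longrightarrow> I \<subseteq> A" "i1 {}" using d(5) unfolding matroid_def by auto
  have i2: "\<forall>I. i2 I \<longrightarrow> I \<subseteq> B" "i2 {}" using d(6) unfolding matroid_def by auto
  have eq: "\<And>I. (indep I \<and> I \<subseteq> X) = (\<exists>I1 I2. I = I1 \<union> I2 \<and> i1 I1 \<and> i2 I2)"
    using d(7) unfolding restr_def dsum_def by metis
  have g1: "i1 J" if "indep J" "J \<subseteq> A" for J
  proof -
    have "indep J \<and> J \<subseteq> X" using that d(4) by auto
    then obtain J1 J2 where "J = J1 \<union> J2" "i1 J1" "i2 J2" using eq[of J] by blast
    moreover then have "J2 = {}" using i2 that d(3) by blast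
    ultimately show ?thesis by simp
  qed
  have g2: "i2 J" if "indep J" "J \<subseteq> B" for J
  proof -
    have "indep J \<and> J \<subseteq> X" using that d(4) by auto
    then obtain J1 J2 where "J = J1 \<union> J2" "i1 J1" "i2 J2" using eq[of J] by blast
    moreover then have "J1 = {}" using i1 that d(3) by blast
    ultimately show ?thesis by simp
  qed
  have "sep indep X A"
  proof (rule sep_charI)
    show "A \<subseteq> X" using d(4) by auto
  next
    fix I assume I0: "I \<subseteq> X" "indep (I \<inter> A)" "indep (I - A)"
    then have I: "I \<subseteq> X \<and> indep (I \<inter> A) \<and> indep (I - A)" by auto
    have "i1 (I \<inter> A)" using g1 I by auto
    moreover have "i2 (I - A)" using g2 I d(4) by auto
    moreover have "I = (I \<inter> A) \<union> (I - A)" by auto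
    ultimately show "indep I" using eq[of I] by blast
  qed
  moreover have "X - A = B" using d by auto
  ultimately show ?thesis using d by auto
qed

lemma rk_fin: "finite X \<Longrightarrow> finite {card I |I. I \<subseteq> X \<and> indep I}"
proof -
  assume "finite X"
  moreover have "{card I |I. I \<subseteq> X \<and> indep I} \<subseteq> card ` Pow X" by auto
  ultimately show ?thesis using finite_subset by blast
qed

lemma rk_ge: "finite X \<Longrightarrow> I \<subseteq> X \<Longrightarrow> indep I \<Longrightarrow> card I \<le> rk indep X"
  unfolding rk_def by (rule Max_ge[OF rk_fin]) auto

lemma rk_ex: "finite X \<Longrightarrow> \<exists>I. I \<subseteq> X \<and> indep I \<and> card I = rk indep X"
proof -
  assume f: "finite X"
  have fin: "finite {card I |I. I \<subseteq> X \<and> indep I}" using rk_fin f by auto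
  have "{card I |I. I \<subseteq> X \<and> indep I} \<noteq> {}" using iempty by auto
  from Max_in[OF fin this] show ?thesis unfolding rk_def by auto
qed

lemma rk_empty: "rk indep {} = 0"
  using rk_ex[of "{}"] by auto

lemma rk_add:
  assumes "finite T" "sep indep T X"
  shows "rk indep T = rk indep X + rk indep (T - X)"
proof -
  have XT: "X \<subseteq> T" using assms sep_sub by auto
  have fX: "finite X" "finite (T - X)" using assms XT finite_subset by auto
  obtain I1 where I1: "I1 \<subseteq> X" "indep I1" "card I1 = rk indep X" using rk_ex fX by blast
  obtain I2 where I2: "I2 \<subseteq> T - X" "indep I2" "card I2 = rk indep (T - X)" using rk_ex fX by blast
  have e: "(I1 \<union> I2) \<inter> X = I1" "(I1 \<union> I2) - X = I2" using I1 I2 by auto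
  have "indep (I1 \<union> I2)"
    by (rule sep_charD[OF assms(2)]) (use I1 I2 XT e in auto)
  then have "card (I1 \<union> I2) \<le> rk indep T" by (rule rk_ge[OF assms(1), rotated]) (use I1 I2 XT in auto)
  moreover have "card (I1 \<union> I2) = card I1 + card I2"
    using I1 I2 fX finite_subset by (intro card_Un_disjoint) auto
  ultimately have 1: "rk indep X + rk indep (T - X) \<le> rk indep T" using I1 I2 by auto
  obtain I where I: "I \<subseteq> T" "indep I" "card I = rk indep T" using rk_ex assms by blast
  have "card I = card (I \<inter> X) + card (I - X)"
    using I assms finite_subset by (metis card_Int_Diff)
  moreover have "card (I \<inter> X) \<le> rk indep X" using rk_ge fX I hered by (meson Int_lower1 Int_lower2)
  moreover have "card (I - X) \<le> rk indep (T - X)" using rk_ge fX I hered by (meson Diff_mono Diff_subset order_refl)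
  ultimately show ?thesis using 1 I by linarith
qed

lemma nullity_add:
  assumes "finite T" "sep indep T X"
  shows "nullity indep T = nullity indep X + nullity indep (T - X)"
proof -
  have XT: "X \<subseteq> T" using assms sep_sub by auto
  have "card T = card X + card (T - X)" using assms XT
    by (metis add.commute card_Diff_subset card_mono finite_subset le_add_diff_inverse2)
  then show ?thesis using rk_add[OF assms] unfolding nullity_def by simp
qed

lemma Phi_add:
  assumes "T \<subseteq> E" "sep indep T X"
  shows "Phi indep SS T = Phi indep SS X + Phi indep SS (T - X)"
proof -
  let ?P = "\<lambda>Y. {U\<in>SS. U \<subseteq> Y \<and> U \<noteq> {} \<and> connected_matroid U (restr indep U)}"
  have XT: "X \<subseteq> T" using assms sep_sub by auto
  have fT: "finite T" using assms finE finite_subset by auto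
  have fin: "finite (?P Y)" if "Y \<subseteq> T" for Y
    by (rule finite_subset[of _ "Pow T"]) (use that fT in auto)
  have "?P T = ?P X \<union> ?P (T - X)" using conn_side[OF assms(2,1)] XT by auto
  moreover have "?P X \<inter> ?P (T - X) = {}" by auto
  ultimately show ?thesis unfolding Phi_def
    using fin XT by (simp add: sum.union_disjoint)
qed

lemma main:
  assumes SS: "SS \<subseteq> Pow E" "S \<subseteq> E"
    and hyp: "\<forall>T\<in>SS. T \<subseteq> S \<longrightarrow> (\<forall>C. component indep T C \<longrightarrow> C \<in> SS)"
  shows "X \<subseteq> S \<Longrightarrow> (\<forall>T. T \<in> SS \<longrightarrow> T \<subseteq> S \<longrightarrow> sep indep T X \<longrightarrow> Phi indep SS X = nullity indep X)
     \<and> (X \<in> SS \<longrightarrow> \<not> connected_matroid X (restr indep X) \<longrightarrow> a_coef indep SS X = 0)"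
proof (induction "card X" arbitrary: X rule: less_induct)
  case less
  have XS: "X \<subseteq> S" using less.prems .
  have finS: "finite S" using SS(2) finE finite_subset by auto
  have fX: "finite X" using XS finS finite_subset by auto
  have XE: "X \<subseteq> E" using XS SS(2) by auto
  have IH: "(\<forall>T. T \<in> SS \<longrightarrow> T \<subseteq> S \<longrightarrow> sep indep T Y \<longrightarrow> Phi indep SS Y = nullity indep Y)
     \<and> (Y \<in> SS \<longrightarrow> \<not> connected_matroid Y (restr indep Y) \<longrightarrow> a_coef indep SS Y = 0)"
    if Y: "Y \<subset> X" for Y
  proof -
    have "card Y < card X" using psubset_card_mono[OF fX Y] .
    moreover have "Y \<subseteq> S" using Y XS by auto
    ultimately show ?thesis using less(1) by blast
  qed
  have finD: "finite {U\<in>SS. U \<subset> X}"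
    by (rule finite_subset[of _ "Pow X"]) (use fX in auto)
  have sumD: "(\<Sum>U\<in>{U\<in>SS. U \<subset> X}. a_coef indep SS U)
      = (\<Sum>U\<in>{U\<in>SS. U \<subset> X \<and> U \<noteq> {} \<and> connected_matroid U (restr indep U)}. a_coef indep SS U)"
  proof (rule sum.mono_neutral_right[OF finD])
    show "{U\<in>SS. U \<subset> X \<and> U \<noteq> {} \<and> connected_matroid U (restr indep U)} \<subseteq> {U\<in>SS. U \<subset> X}" by auto
    show "\<forall>U\<in>{U\<in>SS. U \<subset> X} - {U\<in>SS. U \<subset> X \<and> U \<noteq> {} \<and> connected_matroid U (restr indep U)}.
        a_coef indep SS U = 0"
    proof
      fix U assume U: "U \<in> {U\<in>SS. U \<subset> X} - {U\<in>SS. U \<subset> X \<and> U \<noteq> {} \<and> connected_matroid U (restr indep U)}"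
      show "a_coef indep SS U = 0"
      proof (cases "U = {}")
        case True then show ?thesis by (simp add: a_coef_empty)
      next
        case False
        then have "U \<subset> X" "U \<in> SS" "\<not> connected_matroid U (restr indep U)" using U by auto
        then show ?thesis using IH by blast
      qed
    qed
  qed
  have H: "\<forall>T. T \<in> SS \<longrightarrow> T \<subseteq> S \<longrightarrow> sep indep T X \<longrightarrow> Phi indep SS X = nullity indep X"
  proof (intro allI impI)
    fix T assume T: "T \<in> SS" "T \<subseteq> S" "sep indep T X"
    show "Phi indep SS X = nullity indep X"
    proof (cases "X = {}")
      case True
      have e0: "{U\<in>SS. U \<subseteq> X \<and> U \<noteq> {} \<and> connected_matroid U (restr indep U)} = {}" using True by auto
      show ?thesis unfolding Phi_def e0 nullity_def using True by (simp add: rk_empty)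
    next
      case ne: False
      show ?thesis
      proof (cases "connected_matroid X (restr indep X)")
        case True
        have "component indep T X" unfolding component_def using ne True T(3) unfolding sep_def by auto
        then have XSS: "X \<in> SS" using hyp T by blast
        have eqs: "{U\<in>SS. U \<subseteq> X \<and> U \<noteq> {} \<and> connected_matroid U (restr indep U)}
            = insert X {U\<in>SS. U \<subset> X \<and> U \<noteq> {} \<and> connected_matroid U (restr indep U)}"
          using XSS ne True by auto
        have finC: "finite {U\<in>SS. U \<subset> X \<and> U \<noteq> {} \<and> connected_matroid U (restr indep U)}"
          by (rule finite_subset[OF _ finD]) auto
        have "Phi indep SS X = a_coef indep SS X +
            (\<Sum>U\<in>{U\<in>SS. U \<subset> X \<and> U \<noteq> {} \<and> connected_matroid U (restr indep U)}. a_coef indep SS U)"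
          unfolding Phi_def eqs using finC by (simp add: sum.insert)
        then show ?thesis using sumD a_coef_rec[OF fX ne] by simp
      next
        case False
        obtain A where A: "A \<noteq> {}" "X - A \<noteq> {}" "A \<subseteq> X" "sep indep X A"
          using disconn_split[OF XE False] by blast
        have p: "A \<subset> X" "X - A \<subset> X" using A by auto
        have sA: "sep indep T A" "sep indep T (X - A)"
          using sep_trans[OF T(3) A(4)] sep_trans[OF T(3) sep_compl[OF A(4)]] by auto
        have "Phi indep SS A = nullity indep A" "Phi indep SS (X - A) = nullity indep (X - A)"
          using IH[OF p(1)] IH[OF p(2)] T sA by auto
        moreover have "Phi indep SS X = Phi indep SS A + Phi indep SS (X - A)" using Phi_add[OF XE A(4)] .
        moreover have "nullity indep X = nullity indep A + nullity indep (X - A)" using nullity_add[OF fX A(4)] .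
        ultimately show ?thesis by simp
      qed
    qed
  qed
  show ?case
  proof (rule conjI[OF H], intro impI)
    assume XSS: "X \<in> SS" and nc: "\<not> connected_matroid X (restr indep X)"
    have ne: "X \<noteq> {}" using nc conn_empty by auto
    have "Phi indep SS X = nullity indep X" using H XSS XS sep_refl by blast
    moreover have "{U\<in>SS. U \<subseteq> X \<and> U \<noteq> {} \<and> connected_matroid U (restr indep U)}
        = {U\<in>SS. U \<subset> X \<and> U \<noteq> {} \<and> connected_matroid U (restr indep U)}" using nc by auto
    ultimately have "nullity indep X = (\<Sum>U\<in>{U\<in>SS. U \<subset> X}. a_coef indep SS U)"
      using sumD unfolding Phi_def by simp
    then show "a_coef indep SS X = 0" using a_coef_rec[OF fX ne] by simp
  qed
qed

end

theorem proposition6p5: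
  fixes E :: "'a set" and indep :: "'a set \<Rightarrow> bool"
    and \<S> :: "'a set set" and S :: "'a set"
  assumes "matroid E indep"
    and "\<S> \<subseteq> Pow E"
    and "S \<in> \<S>"
    and "\<not> connected_matroid S (restr indep S)"
    and "\<forall>T \<in> \<S>. T \<subseteq> S \<longrightarrow> (\<forall>C. component indep T C \<longrightarrow> C \<in> \<S>)"
  shows "a_coef indep \<S> S = 0"
proof -
  have SE: "S \<subseteq> E" using assms(2,3) by auto
  show ?thesis using main[OF assms(1) assms(2) SE assms(5) order_refl] assms(3,4) by blast
qed

end
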